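(* For every $\alpha \in (1/3, 1/2)$ there exists $\beta>0$ such that the following holds for all sufficiently large $n$: every $n$-vertex graph $G$ with at least $\lfloor n^2/4\rfloor+1$ edges and $b(G)<\alpha n/2$ has at least $\beta n^3$ triangles.
   Context: Graphs are finite and simple. A book of size $b$ in a graph is an edge that lies in $b$ triangles; $b(G)$ denotes the maximum size of a book in $G$, i.e. the maximum, over all edges $e$ of $G$, of the number of triangles of $G$ containing $e$. *)

theory Defs
  imports Complex_Main
begin

definition simple_graph :: "'a set \<Rightarrow> 'a set set \<Rightarrow> bool" where
  "simple_graph V E \<longleftrightarrow> finite V \<and> (\<forall>e\<in>E. e \<subseteq> V \<and> card e = 2)"

definition triangles :: "'a set \<Rightarrow> 'a set set \<Rightarrow> 'a set set" where
  "triangles V E = {T. T \<subseteq> V \<and> card T = 3 \<and> (\<forall>x\<in>T. \<forall>y\<in>T. x \<noteq> y \<longrightarrow> {x, y} \<in> E)}"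

definition book_size :: "'a set \<Rightarrow> 'a set set \<Rightarrow> 'a set \<Rightarrow> nat" where
  "book_size V E e = card {T \<in> triangles V E. e \<subseteq> T}"

definition max_book :: "'a set \<Rightarrow> 'a set set \<Rightarrow> nat" where
  "max_book V E = (if E = {} then 0 else Max (book_size V E ` E))"

end

theory Submission
  imports Defs
begin


locale sg =
  fixes V :: "nat set" and E :: "nat set set"
  assumes sg: "simple_graph V E"
begin

definition adj :: "nat \<Rightarrow> nat \<Rightarrow> real" where
  "adj u v = (if {u,v} \<in> E then 1 else 0)"

lemma finV: "finite V" using sg by (simp add: simple_graph_def)

lemma edgeD: assumes "{u,v} \<in> E" shows "u \<in> V" "v \<in> V" "u \<noteq> v"
proof -
  have "{u,v} \<subseteq> V" "card {u,v} = 2" using sg assms by (auto simp: simple_graph_def)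
  then show "u \<in> V" "v \<in> V" "u \<noteq> v" by auto
qed

lemma finE: "finite E"
proof -
  have "E \<subseteq> Pow V" using sg by (auto simp: simple_graph_def)
  then show ?thesis using finite_subset finV by auto
qed

lemma adj_sym: "adj u v = adj v u" by (simp add: adj_def insert_commute)
lemma adj_self[simp]: "adj v v = 0" using edgeD[of v v] by (auto simp: adj_def)
lemma adj_ge0[simp]: "0 \<le> adj u v" by (simp add: adj_def)
lemma adj_le1[simp]: "adj u v \<le> 1" by (simp add: adj_def)
lemma adj_cases: "adj u v = 0 \<or> adj u v = 1" by (simp add: adj_def)
lemma adj_sq[simp]: "adj u v * adj u v = adj u v" by (simp add: adj_def)
lemma adj_out: "u \<notin> V \<Longrightarrow> adj u v = 0" "v \<notin> V \<Longrightarrow> adj u v = 0"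
  using edgeD by (auto simp: adj_def)

lemma card_E: "2 * real (card E) \<le> (\<Sum>u\<in>V. \<Sum>w\<in>V. adj u w)"
proof -
  have key: "2 \<le> (\<Sum>u\<in>V. \<Sum>w\<in>V. if e = {u,w} then 1 else (0::real))" if "e \<in> E" for e
  proof -
    have "e \<subseteq> V" "card e = 2" using sg that by (auto simp: simple_graph_def)
    then obtain p q where pq: "e = {p,q}" "p \<noteq> q" by (auto simp: card_2_iff)
    with \<open>e \<subseteq> V\<close> have pqV: "p \<in> V" "q \<in> V" by auto
    let ?g = "\<lambda>u. \<Sum>w\<in>V. if e = {u,w} then 1 else (0::real)"
    have g0: "\<And>u. 0 \<le> ?g u" by (intro sum_nonneg) auto
    have gp: "1 \<le> ?g p"
      using member_le_sum[of q V "\<lambda>w. if e = {p,w} then 1 else (0::real)"] pqV pq finV by auto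
    have gq: "1 \<le> ?g q"
      using member_le_sum[of p V "\<lambda>w. if e = {q,w} then 1 else (0::real)"] pqV pq finV
      by (auto simp: insert_commute)
    have "?g p + ?g q = sum ?g {p,q}" using pq by simp
    also have "\<dots> \<le> sum ?g V" using pqV finV g0 by (intro sum_mono2) auto
    finally show ?thesis using gp gq by simp
  qed
  have "2 * real (card E) = (\<Sum>e\<in>E. 2)" by simp
  also have "\<dots> \<le> (\<Sum>e\<in>E. \<Sum>u\<in>V. \<Sum>w\<in>V. if e = {u,w} then 1 else (0::real))"
    by (intro sum_mono key)
  also have "\<dots> = (\<Sum>u\<in>V. \<Sum>w\<in>V. \<Sum>e\<in>E. if e = {u,w} then 1 else (0::real))"
    by (simp add: sum.swap[of _ E] sum.swap[of _ E V])
  also have "\<dots> = (\<Sum>u\<in>V. \<Sum>w\<in>V. adj u w)"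
    by (simp add: adj_def sum.delta[OF finE])
  finally show ?thesis .
qed

lemma sum_ind_card: "(\<Sum>x\<in>A. if P x then 1 else (0::real)) = real (card {x\<in>A. P x})" if "finite A" for A P
  using that by (simp add: sum.If_cases Int_def)

lemma finTri: "finite (triangles V E)"
proof -
  have "triangles V E \<subseteq> Pow V" by (auto simp: triangles_def)
  then show ?thesis using finite_subset finV by auto
qed

lemma tri_mem: assumes "adj x u = 1" "adj u w = 1" "adj x w = 1"
  shows "{x,u,w} \<in> triangles V E"
proof -
  have e: "{x,u} \<in> E" "{u,w} \<in> E" "{x,w} \<in> E" using assms by (auto simp: adj_def split: if_splits)
  note d = edgeD[OF e(1)] edgeD[OF e(2)] edgeD[OF e(3)]
  have c: "card {x,u,w} = 3" using d by auto
  show ?thesis unfolding triangles_def using d c e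
    by (auto simp: insert_commute)
qed

lemma tri_count: "(\<Sum>x\<in>V. \<Sum>u\<in>V. \<Sum>w\<in>V. adj x u * adj u w * adj x w) \<le> 27 * real (card (triangles V E))"
proof -
  let ?I = "\<lambda>T y. if y \<in> T then 1 else (0::real)"
  have pt: "adj x u * adj u w * adj x w \<le> (\<Sum>T\<in>triangles V E. ?I T x * ?I T u * ?I T w)" for x u w
  proof (cases "adj x u = 1 \<and> adj u w = 1 \<and> adj x w = 1")
    case True
    then have "{x,u,w} \<in> triangles V E" using tri_mem by auto
    then have "?I {x,u,w} x * ?I {x,u,w} u * ?I {x,u,w} w \<le> (\<Sum>T\<in>triangles V E. ?I T x * ?I T u * ?I T w)"
      by (intro member_le_sum finTri) auto
    then show ?thesis using True by simp
  next
    case False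
    then have "adj x u * adj u w * adj x w = 0" using adj_cases[of x u] adj_cases[of u w] adj_cases[of x w] by auto
    moreover have "0 \<le> (\<Sum>T\<in>triangles V E. ?I T x * ?I T u * ?I T w)" by (intro sum_nonneg) auto
    ultimately show ?thesis by linarith
  qed
  have "(\<Sum>x\<in>V. \<Sum>u\<in>V. \<Sum>w\<in>V. adj x u * adj u w * adj x w) \<le>
        (\<Sum>x\<in>V. \<Sum>u\<in>V. \<Sum>w\<in>V. \<Sum>T\<in>triangles V E. ?I T x * ?I T u * ?I T w)"
    by (intro sum_mono pt)
  also have "\<dots> = (\<Sum>x\<in>V. \<Sum>u\<in>V. \<Sum>T\<in>triangles V E. \<Sum>w\<in>V. ?I T x * ?I T u * ?I T w)"
    by (intro sum.cong refl) (rule sum.swap)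
  also have "\<dots> = (\<Sum>x\<in>V. \<Sum>T\<in>triangles V E. \<Sum>u\<in>V. \<Sum>w\<in>V. ?I T x * ?I T u * ?I T w)"
    by (intro sum.cong refl) (rule sum.swap)
  also have "\<dots> = (\<Sum>T\<in>triangles V E. \<Sum>x\<in>V. \<Sum>u\<in>V. \<Sum>w\<in>V. ?I T x * ?I T u * ?I T w)"
    by (rule sum.swap)
  also have "\<dots> = (\<Sum>T\<in>triangles V E. 27)"
  proof (intro sum.cong refl)
    fix T assume "T \<in> triangles V E"
    then have "T \<subseteq> V" "card T = 3" by (auto simp: triangles_def)
    then have "{x\<in>V. x\<in>T} = T" by auto
    then have s3: "(\<Sum>x\<in>V. ?I T x) = 3" using sum_ind_card[OF finV, of "\<lambda>x. x\<in>T"] \<open>card T = 3\<close> by simp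
    have "(\<Sum>x\<in>V. \<Sum>u\<in>V. \<Sum>w\<in>V. ?I T x * ?I T u * ?I T w) = (\<Sum>x\<in>V. \<Sum>u\<in>V. ?I T x * ?I T u * 3)"
      by (simp only: sum_distrib_left[symmetric] s3)
    also have "\<dots> = (\<Sum>x\<in>V. \<Sum>u\<in>V. ?I T u * (?I T x * 3))"
      by (intro sum.cong refl) simp
    also have "\<dots> = (\<Sum>x\<in>V. (\<Sum>u\<in>V. ?I T u) * (?I T x * 3))"
      by (intro sum.cong refl) (rule sum_distrib_right[symmetric])
    also have "\<dots> = (\<Sum>x\<in>V. ?I T x * 9)" unfolding s3 by (intro sum.cong refl) simp
    also have "\<dots> = (\<Sum>x\<in>V. ?I T x) * 9" by (rule sum_distrib_right[symmetric])
    also have "\<dots> = 27" unfolding s3 by simp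
    finally show "(\<Sum>x\<in>V. \<Sum>u\<in>V. \<Sum>w\<in>V. ?I T x * ?I T u * ?I T w) = 27" .
  qed
  finally show ?thesis by simp
qed

lemma book_bound: assumes "{u,v} \<in> E"
  shows "(\<Sum>w\<in>V. adj u w * adj v w) \<le> real (max_book V E)"
proof -
  have "(\<Sum>w\<in>V. adj u w * adj v w) = (\<Sum>w\<in>V. if {u,w} \<in> E \<and> {v,w} \<in> E then 1 else 0)"
    by (intro sum.cong) (auto simp: adj_def)
  also have "\<dots> = real (card {w\<in>V. {u,w} \<in> E \<and> {v,w} \<in> E})" by (rule sum_ind_card[OF finV])
  also have "card {w\<in>V. {u,w} \<in> E \<and> {v,w} \<in> E} \<le> card {T \<in> triangles V E. {u,v} \<subseteq> T}"
  proof (rule card_inj_on_le[where f="\<lambda>w. {u,v,w}"])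
    show "finite {T \<in> triangles V E. {u,v} \<subseteq> T}" using finTri by simp
    show "inj_on (\<lambda>w. {u,v,w}) {w\<in>V. {u,w} \<in> E \<and> {v,w} \<in> E}"
    proof (rule inj_onI)
      fix w w' assume w: "w \<in> {w\<in>V. {u,w} \<in> E \<and> {v,w} \<in> E}" "w' \<in> {w\<in>V. {u,w} \<in> E \<and> {v,w} \<in> E}"
        and eq: "{u,v,w} = {u,v,w'}"
      have "w \<noteq> u" "w \<noteq> v" "w' \<noteq> u" "w' \<noteq> v" using w edgeD by blast+
      then show "w = w'" using eq by blast
    qed
    show "(\<lambda>w. {u,v,w}) ` {w\<in>V. {u,w} \<in> E \<and> {v,w} \<in> E} \<subseteq> {T \<in> triangles V E. {u,v} \<subseteq> T}"
    proof safe
      fix w assume "w \<in> V" "{u,w} \<in> E" "{v,w} \<in> E"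
      then have "adj u v = 1" "adj v w = 1" "adj u w = 1" using assms by (auto simp: adj_def)
      then show "{u,v,w} \<in> triangles V E" by (rule tri_mem)
    qed
  qed
  then have "real (card {w\<in>V. {u,w} \<in> E \<and> {v,w} \<in> E}) \<le> real (book_size V E {u,v})"
    by (simp add: book_size_def)
  also have "book_size V E {u,v} \<le> max_book V E"
    using assms finE by (auto simp: max_book_def)
  finally show ?thesis by simp
qed

definition deg :: "nat \<Rightarrow> real" where "deg u = (\<Sum>w\<in>V. adj u w)"
definition cr :: "nat set \<Rightarrow> nat \<Rightarrow> nat \<Rightarrow> real" where
  "cr A u w = (if (u\<in>A) = (w\<in>A) then 0 else 1)"
definition X :: "nat set \<Rightarrow> real" where "X A = (\<Sum>u\<in>V. \<Sum>w\<in>V. cr A u w * adj u w)"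
definition Nb :: "nat \<Rightarrow> nat set" where "Nb x = {y\<in>V. adj x y = 1}"
definition TT :: real where "TT = (\<Sum>x\<in>V. \<Sum>u\<in>V. \<Sum>w\<in>V. adj x u * adj u w * adj x w)"
definition DD :: real where "DD = (\<Sum>u\<in>V. \<Sum>w\<in>V. adj u w)"

lemma sum_deg: "(\<Sum>u\<in>V. deg u) = DD" by (simp add: deg_def DD_def)

lemma sumX_Nb: "(\<Sum>x\<in>V. X (Nb x)) = 2 * (\<Sum>u\<in>V. deg u * deg u) - 2 * TT"
proof -
  have pt: "cr (Nb x) u w * adj u w = adj x u * adj u w + adj x w * adj u w - 2 * (adj x u * adj u w * adj x w)"
    if "u \<in> V" "w \<in> V" for x u w
    using that adj_cases[of x u] adj_cases[of x w] adj_cases[of u w]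
    by (auto simp: cr_def Nb_def)
  have "(\<Sum>x\<in>V. X (Nb x)) = (\<Sum>x\<in>V. \<Sum>u\<in>V. \<Sum>w\<in>V. adj x u * adj u w + adj x w * adj u w - 2 * (adj x u * adj u w * adj x w))"
    unfolding X_def by (intro sum.cong refl) (simp add: pt)
  also have "\<dots> = (\<Sum>x\<in>V. \<Sum>u\<in>V. \<Sum>w\<in>V. adj x u * adj u w) + (\<Sum>x\<in>V. \<Sum>u\<in>V. \<Sum>w\<in>V. adj x w * adj u w) - 2 * TT"
    by (simp add: TT_def sum.distrib sum_subtractf sum_distrib_left)
  also have "(\<Sum>x\<in>V. \<Sum>u\<in>V. \<Sum>w\<in>V. adj x u * adj u w) = (\<Sum>u\<in>V. deg u * deg u)"
  proof -
    have "(\<Sum>x\<in>V. \<Sum>u\<in>V. \<Sum>w\<in>V. adj x u * adj u w) = (\<Sum>u\<in>V. \<Sum>x\<in>V. adj x u * deg u)"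
      by (subst sum.swap) (simp add: deg_def sum_distrib_left)
    also have "\<dots> = (\<Sum>u\<in>V. deg u * deg u)"
      by (simp add: deg_def sum_distrib_right adj_sym)
    finally show ?thesis .
  qed
  also have "(\<Sum>x\<in>V. \<Sum>u\<in>V. \<Sum>w\<in>V. adj x w * adj u w) = (\<Sum>u\<in>V. deg u * deg u)"
  proof -
    have "(\<Sum>x\<in>V. \<Sum>u\<in>V. \<Sum>w\<in>V. adj x w * adj u w) = (\<Sum>x\<in>V. \<Sum>w\<in>V. \<Sum>u\<in>V. adj x w * adj u w)"
      by (rule sum.cong[OF refl], rule sum.swap)
    also have "\<dots> = (\<Sum>x\<in>V. \<Sum>w\<in>V. adj x w * deg w)"
      by (simp add: deg_def sum_distrib_left sum_distrib_right adj_sym)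
    also have "\<dots> = (\<Sum>w\<in>V. \<Sum>x\<in>V. adj x w * deg w)" by (rule sum.swap)
    also have "\<dots> = (\<Sum>u\<in>V. deg u * deg u)"
      by (simp add: deg_def sum_distrib_right adj_sym)
    finally show ?thesis .
  qed
  finally show ?thesis by simp
qed

lemma stage1:
  assumes n: "card V = n" "0 < n" and D: "real n ^ 2 / 2 \<le> DD"
  shows "\<exists>x\<in>V. real n ^ 2 / 2 - 2 * TT / real n \<le> X (Nb x)"
proof (rule ccontr)
  assume "\<not> ?thesis"
  then have lt: "\<And>x. x \<in> V \<Longrightarrow> X (Nb x) < real n ^ 2 / 2 - 2 * TT / real n" by auto
  have "(\<Sum>x\<in>V. X (Nb x)) < (\<Sum>x\<in>V. real n ^ 2 / 2 - 2 * TT / real n)"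
    using n finV by (intro sum_strict_mono lt) auto
  also have "\<dots> = real n ^ 3 / 2 - 2 * TT" using n by (simp add: field_simps power3_eq_cube power2_eq_square)
  finally have A: "(\<Sum>x\<in>V. X (Nb x)) < real n ^ 3 / 2 - 2 * TT" .
  have "0 \<le> (\<Sum>u\<in>V. (deg u - real n / 2)^2)" by (intro sum_nonneg) auto
  also have "\<dots> = (\<Sum>u\<in>V. deg u * deg u) - real n * DD + real n ^ 3 / 4"
    using n by (simp add: power2_eq_square algebra_simps sum.distrib sum_subtractf sum_distrib_left[symmetric] sum_deg power3_eq_cube)
  finally have "real n * DD - real n ^ 3 / 4 \<le> (\<Sum>u\<in>V. deg u * deg u)" by simp
  moreover have "real n * (real n ^ 2 / 2) \<le> real n * DD" using D by (intro mult_left_mono) auto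
  ultimately have "real n ^ 3 / 4 \<le> (\<Sum>u\<in>V. deg u * deg u)" by (simp add: power3_eq_cube power2_eq_square)
  then show False using A sumX_Nb by simp
qed

end



locale mc = sg +
  fixes A :: "nat set"
  assumes AV: "A \<subseteq> V" and amax: "\<And>A'. A' \<subseteq> V \<Longrightarrow> X A' \<le> X A"
begin

definition din :: "nat \<Rightarrow> real" where "din v = (\<Sum>w\<in>V. (1 - cr A v w) * adj v w)"
definition dcr :: "nat \<Rightarrow> real" where "dcr v = (\<Sum>w\<in>V. cr A v w * adj v w)"
definition q :: "nat \<Rightarrow> real" where "q v = (\<Sum>w\<in>V. cr A v w)"
definition r :: "nat \<Rightarrow> real" where "r v = (\<Sum>w\<in>V. cr A v w * (1 - adj v w))"
definition com :: "nat \<Rightarrow> nat \<Rightarrow> real" where "com u v = (\<Sum>w\<in>V. adj u w * adj v w)"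

lemma cr_sym: "cr B u w = cr B w u" by (auto simp: cr_def)
lemma cr_cases: "cr B u w = 0 \<or> cr B u w = 1" by (auto simp: cr_def)
lemma cr_ge0[simp]: "0 \<le> cr B u w" and cr_le1[simp]: "cr B u w \<le> 1" by (auto simp: cr_def)

lemma r_eq: "r v = q v - dcr v"
  by (simp add: r_def q_def dcr_def algebra_simps sum_subtractf)
lemma r_ge0: "0 \<le> r v" unfolding r_def by (intro sum_nonneg) auto
lemma din_ge0: "0 \<le> din v" unfolding din_def by (intro sum_nonneg) auto
lemma dcr_ge0: "0 \<le> dcr v" unfolding dcr_def by (intro sum_nonneg) auto

lemma flip_le: assumes "v \<in> V" shows "din v \<le> dcr v"
proof -
  define A' where "A' = (if v \<in> A then A - {v} else insert v A)"
  have A'V: "A' \<subseteq> V" using AV assms by (auto simp: A'_def)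
  have mem: "(u \<in> A') = (if u = v then v \<notin> A else u \<in> A)" for u by (auto simp: A'_def)
  have pt: "cr A' u w * adj u w = cr A u w * adj u w
      + (if u = v then (1 - 2 * cr A v w) * adj v w else 0)
      + (if w = v then (1 - 2 * cr A u v) * adj u v else 0)" for u w
  proof -
    have c1: "cr A' x y = cr A x y" if "x \<noteq> v" "y \<noteq> v" for x y using that by (simp add: cr_def mem)
    have c2: "cr A' v y = 1 - cr A v y" if "y \<noteq> v" for y using that by (simp add: cr_def mem)
    have c3: "cr A' x v = 1 - cr A x v" if "x \<noteq> v" for x using that by (simp add: cr_def mem)
    show ?thesis
    proof (cases "u = v")
      case True
      then show ?thesis by (cases "w = v") (simp_all add: c2 algebra_simps)
    next
      case False
      then show ?thesis by (cases "w = v") (simp_all add: c1 c3 algebra_simps)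
    qed
  qed
  have "X A' = X A + (\<Sum>u\<in>V. \<Sum>w\<in>V. if u = v then (1 - 2 * cr A v w) * adj v w else 0)
       + (\<Sum>u\<in>V. (\<Sum>w\<in>V. if w = v then (1 - 2 * cr A u v) * adj u v else 0))"
    unfolding X_def pt by (simp only: sum.distrib)
  also have "(\<Sum>u\<in>V. \<Sum>w\<in>V. if u = v then (1 - 2 * cr A v w) * adj v w else 0)
      = (\<Sum>u\<in>V. if u = v then (\<Sum>w\<in>V. (1 - 2 * cr A v w) * adj v w) else 0)"
    by (intro sum.cong) auto
  also have "\<dots> = (\<Sum>w\<in>V. (1 - 2 * cr A v w) * adj v w)" using assms finV by (simp add: sum.delta')
  also have "(\<Sum>u\<in>V. (\<Sum>w\<in>V. if w = v then (1 - 2 * cr A u v) * adj u v else 0))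
      = (\<Sum>u\<in>V. (1 - 2 * cr A u v) * adj u v)" using assms finV by (simp add: sum.delta')
  also have "(\<Sum>u\<in>V. (1 - 2 * cr A u v) * adj u v) = (\<Sum>w\<in>V. (1 - 2 * cr A v w) * adj v w)"
    by (simp add: cr_sym adj_sym)
  also have "(\<Sum>w\<in>V. (1 - 2 * cr A v w) * adj v w) = din v - dcr v"
    by (simp add: din_def dcr_def algebra_simps sum_subtractf sum.distrib sum_distrib_left)
  finally have "X A' = X A + 2 * (din v - dcr v)" by simp
  with amax[OF A'V] show ?thesis by simp
qed

lemma sum_dcr: "(\<Sum>v\<in>V. dcr v) = X A" by (simp add: dcr_def X_def)
lemma sum_din: "(\<Sum>v\<in>V. din v) = DD - X A"
  by (simp add: din_def X_def DD_def algebra_simps sum_subtractf sum.distrib)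

lemma q_val: "q v = (if v \<in> A then real (card (V - A)) else real (card A))"
proof -
  have "q v = (\<Sum>w\<in>V. if (w \<in> A) \<noteq> (v \<in> A) then 1 else 0)"
    unfolding q_def cr_def by (intro sum.cong) auto
  also have "\<dots> = real (card {w\<in>V. (w \<in> A) \<noteq> (v \<in> A)})" by (rule sum_ind_card[OF finV])
  also have "{w\<in>V. (w \<in> A) \<noteq> (v \<in> A)} = (if v \<in> A then V - A else A)" using AV by auto
  finally show ?thesis by simp
qed

lemma card_split: "real (card A) + real (card (V - A)) = real (card V)"
  using AV finV by (metis card_Diff_subset finite_subset card_mono of_nat_add le_add_diff_inverse)

lemma sum_q: "(\<Sum>v\<in>V. q v) = 2 * real (card A) * real (card (V - A))"
proof -
  have "(\<Sum>v\<in>V. q v) = (\<Sum>v\<in>V. if v \<in> A then real (card (V - A)) else real (card A))"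
    by (simp add: q_val)
  also have "\<dots> = real (card {v\<in>V. v\<in>A}) * real (card (V - A)) + real (card {v\<in>V. v \<notin> A}) * real (card A)"
    using finV by (simp add: sum.If_cases Int_def)
  also have "{v\<in>V. v\<in>A} = A" using AV by auto
  also have "{v\<in>V. v\<notin>A} = V - A" by auto
  finally show ?thesis by simp
qed

lemma com_inner: assumes "cr A u v = 0" shows "q v - r u - r v \<le> com u v"
proof -
  have cu: "cr A u w = cr A v w" for w using assms by (auto simp: cr_def split: if_splits)
  have "q u = q v" unfolding q_def using cu by simp
  then have "q v - r u - r v = dcr u + dcr v - q v" using r_eq[of u] r_eq[of v] by simp
  also have "\<dots> = (\<Sum>w\<in>V. cr A v w * (adj u w + adj v w - 1))"
    by (simp add: dcr_def q_def cu algebra_simps sum.distrib sum_subtractf)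
  also have "\<dots> \<le> com u v" unfolding com_def
  proof (intro sum_mono)
    fix w show "cr A v w * (adj u w + adj v w - 1) \<le> adj u w * adj v w"
      using adj_cases[of u w] adj_cases[of v w] cr_cases[of A v w] by (elim disjE) simp_all
  qed
  finally show ?thesis .
qed

lemma com_cross: assumes "cr A v w = 1" shows "din v - r w \<le> com v w"
proof -
  have cw: "1 - cr A v y = cr A w y" for y using assms by (auto simp: cr_def split: if_splits)
  have "din v - r w = din v + dcr w - q w" using r_eq[of w] by simp
  also have "\<dots> = (\<Sum>y\<in>V. (1 - cr A v y) * (adj v y + adj w y - 1))"
    by (simp add: din_def dcr_def q_def cw algebra_simps sum.distrib sum_subtractf)
  also have "\<dots> \<le> com v w" unfolding com_def
  proof (intro sum_mono)
    fix y show "(1 - cr A v y) * (adj v y + adj w y - 1) \<le> adj v y * adj w y"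
      using adj_cases[of v y] adj_cases[of w y] cr_cases[of A v y] by (elim disjE) simp_all
  qed
  finally show ?thesis .
qed

lemma adjE: "adj u v = 1 \<Longrightarrow> {u,v} \<in> E" by (simp add: adj_def split: if_splits)

lemma main:
  fixes c :: real and n :: nat
  assumes c: "0 < c" "c < 1/4" and n: "card V = n" "0 < n"
    and D: "real n ^ 2 / 2 < DD"
    and XA: "real n ^ 2 / 2 - 2 * ((1/4 - c)^2 / 16) * real n ^ 2 < X A"
    and bk: "\<And>u v. {u,v} \<in> E \<Longrightarrow> com u v < c * real n"
  shows False
proof -
  define \<eta> where "\<eta> = 1/4 - c"
  have \<eta>: "0 < \<eta>" "\<eta> < 1/4" using c by (auto simp: \<eta>_def)
  have cdef: "c = 1/4 - \<eta>" by (simp add: \<eta>_def)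
  define N where "N = real n"
  have N: "0 < N" using n by (simp add: N_def)
  define a0 where "a0 = real (card A)"
  define b0 where "b0 = real (card (V - A))"
  have ab: "a0 + b0 = N" using card_split n by (simp add: a0_def b0_def N_def)
  have XA': "N^2/2 - \<eta>^2/8 * N^2 < X A" using XA by (simp add: \<eta>_def N_def)
  have D': "N^2/2 < DD" using D by (simp add: N_def)
  define R where "R = (\<Sum>v\<in>V. r v)"
  have sq: "(\<Sum>v\<in>V. q v) = 2 * a0 * b0" using sum_q by (simp add: a0_def b0_def)
  have R_eq: "R = 2 * a0 * b0 - X A"
    by (simp add: R_def r_eq sum_subtractf sq sum_dcr)
  have R0: "0 \<le> R" unfolding R_def by (intro sum_nonneg r_ge0)
  have ab2: "2 * a0 * b0 \<le> N^2 / 2"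
  proof -
    have "0 \<le> (a0 - b0)^2" by simp
    then show ?thesis using ab[symmetric] by (simp add: power2_eq_square algebra_simps)
  qed
  have Rlt: "R < \<eta>^2/8 * N^2" using R_eq ab2 XA' by simp
  have dinR: "R < (\<Sum>v\<in>V. din v)" using sum_din D' R_eq ab2 by simp
  have abig: "a0 * b0 > N^2/4 - \<eta>^2/16 * N^2" using R_eq R0 XA' by simp
  have sides: "N/2 - \<eta>/4 * N < a0 \<and> N/2 - \<eta>/4 * N < b0"
  proof -
    have "(a0 - N/2)^2 = N^2/4 - a0 * b0" using ab[symmetric] by (simp add: power2_eq_square algebra_simps)
    also have "\<dots> < (\<eta>/4 * N)^2"
    proof -
      have e: "(\<eta>/4 * N)^2 = \<eta>^2/16 * N^2" by (simp add: power_mult_distrib power_divide)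
      show ?thesis unfolding e using abig by linarith
    qed
    finally have "\<bar>a0 - N/2\<bar> < \<eta>/4 * N"
      using power2_less_imp_less[of "\<bar>a0 - N/2\<bar>" "\<eta>/4 * N"] \<eta> N by simp
    then show ?thesis using ab unfolding abs_less_iff by linarith
  qed
  have qlb: "N/2 - \<eta>/4 * N < q v" for v using sides q_val[of v] by (simp add: a0_def b0_def)
  define \<tau> where "\<tau> = \<eta>/2 * N"
  define \<beta> where "\<beta> v = (if \<tau> < r v then 1 else (0::real))" for v
  define nb where "nb = (\<Sum>v\<in>V. \<beta> v)"
  have \<beta>01: "\<beta> v = 0 \<or> \<beta> v = 1" for v by (simp add: \<beta>_def)
  have nb0: "0 \<le> nb" unfolding nb_def \<beta>_def by (intro sum_nonneg) auto
  have nblt: "nb < \<eta>/4 * N"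
  proof -
    have "nb * \<tau> = (\<Sum>v\<in>V. \<beta> v * \<tau>)" by (simp add: nb_def sum_distrib_right)
    also have "\<dots> \<le> R" unfolding R_def
      by (intro sum_mono) (use r_ge0 in \<open>auto simp: \<beta>_def\<close>)
    finally have "nb * \<tau> < \<eta>^2/8 * N^2" using Rlt by simp
    then have "nb * (\<eta>/2 * N) < (\<eta>/4 * N) * (\<eta>/2 * N)" by (simp add: \<tau>_def power2_eq_square algebra_simps)
    then show ?thesis using \<eta> N by (simp add: mult_less_cancel_right)
  qed
  have gg: "False" if "cr A u v = 0" "adj u v = 1" "r u \<le> \<tau>" "r v \<le> \<tau>" for u v
  proof -
    have "q v - r u - r v \<le> com u v" by (rule com_inner[OF that(1)])
    moreover have "com u v < c * N" using bk[OF adjE[OF that(2)]] by (simp add: N_def)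
    moreover have "N/2 - \<eta>/4 * N < q v" by (rule qlb)
    moreover have "\<eta> * N < N / 4" using \<eta> N by simp
    moreover have "c * N = N/4 - \<eta> * N" by (simp add: cdef algebra_simps)
    moreover have "\<tau> = \<eta> * N / 2" by (simp add: \<tau>_def)
    moreover have "\<eta> / 4 * N = \<eta> * N / 4" by simp
    ultimately show False using that(3,4) N by linarith
  qed
  have Pfacts: "\<eta> * N < N / 4" "c * N = N/4 - \<eta> * N" "\<tau> = \<eta> * N / 2" "\<eta> / 4 * N = \<eta> * N / 4" "0 < \<eta> * N"
    using \<eta> N by (simp_all add: cdef algebra_simps \<tau>_def)
  have Rsum: "(\<Sum>w\<in>V. cr A v w * adj v w * r w) \<le> R" for v
    unfolding R_def
  proof (intro sum_mono)
    fix w show "cr A v w * adj v w * r w \<le> r w"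
      using r_ge0[of w] adj_cases[of v w] cr_cases[of A v w] by (elim disjE) simp_all
  qed
  have dinb: "din v \<le> (c + \<eta>/2) * N" if vV: "v \<in> V" for v
  proof (rule ccontr)
    assume big: "\<not> ?thesis"
    have pw: "cr A v w * adj v w * (\<eta>/2 * N) \<le> cr A v w * adj v w * r w" for w
    proof (cases "cr A v w = 1 \<and> adj v w = 1")
      case True
      have "din v - r w \<le> com v w" using com_cross True by simp
      moreover have "com v w < c * N" using bk[OF adjE] True by (simp add: N_def)
      ultimately have "\<eta>/2 * N < r w" using big by (simp add: algebra_simps)
      then show ?thesis using True by simp
    next
      case False
      then have "cr A v w * adj v w = 0" using adj_cases[of v w] cr_cases[of A v w] by auto
      then show ?thesis by (simp only: mult_zero_left; simp)
    qed
    have "dcr v * (\<eta>/2 * N) = (\<Sum>w\<in>V. cr A v w * adj v w * (\<eta>/2 * N))"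
      by (simp add: dcr_def sum_distrib_right)
    also have "\<dots> \<le> (\<Sum>w\<in>V. cr A v w * adj v w * r w)" by (intro sum_mono pw)
    also have "\<dots> \<le> R" by (rule Rsum)
    finally have "dcr v * (\<eta>/2 * N) \<le> R" .
    moreover have "din v * (\<eta>/2 * N) \<le> dcr v * (\<eta>/2 * N)"
      using flip_le[OF vV] \<eta> N by (intro mult_right_mono) auto
    moreover have "((c + \<eta>/2) * N) * (\<eta>/2 * N) \<le> din v * (\<eta>/2 * N)"
      using big \<eta> N by (intro mult_right_mono) auto
    moreover have "(\<eta>/2 * N) * (\<eta>/2 * N) \<le> ((c + \<eta>/2) * N) * (\<eta>/2 * N)"
      using c \<eta> N by (intro mult_right_mono) (auto simp: algebra_simps)
    moreover have "(\<eta>/2 * N) * (\<eta>/2 * N) = 2 * (\<eta>^2/8 * N^2)" by (simp add: power2_eq_square)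
    moreover have "0 < \<eta>^2/8 * N^2" using \<eta> N by simp
    ultimately show False using Rlt by linarith
  qed
  have badv: "din v + nb \<le> r v" if vV: "v \<in> V" and rv: "\<tau> < r v" for v
  proof (cases "\<exists>u\<in>V. cr A v u = 0 \<and> adj v u = 1 \<and> r u \<le> \<tau>")
    case True
    then obtain u where u: "u \<in> V" "cr A v u = 0" "adj v u = 1" "r u \<le> \<tau>" by auto
    have "q v - r u - r v \<le> com u v" using com_inner[of u v] u(2) by (simp add: cr_sym)
    moreover have "com u v < c * N" using bk[OF adjE, of u v] u(3) by (simp add: adj_sym N_def)
    moreover have "N/2 - \<eta>/4 * N < q v" by (rule qlb)
    moreover have "din v \<le> (c + \<eta>/2) * N" by (rule dinb[OF vV])
    moreover have "(c + \<eta>/2) * N = c * N + \<eta> * N / 2" by (simp add: algebra_simps)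
    ultimately show ?thesis using u(4) nblt Pfacts by linarith
  next
    case False
    have "din v \<le> nb" unfolding din_def nb_def
    proof (intro sum_mono)
      fix w assume wV: "w \<in> V"
      show "(1 - cr A v w) * adj v w \<le> \<beta> w"
      proof (cases "cr A v w = 0 \<and> adj v w = 1")
        case True
        then have "\<tau> < r w" using False wV by auto
        then show ?thesis using True by (simp add: \<beta>_def)
      next
        case False
        then have "(1 - cr A v w) * adj v w = 0" using adj_cases[of v w] cr_cases[of A v w] by auto
        then show ?thesis using \<beta>01[of w] by (simp only:; auto)
      qed
    qed
    then show ?thesis using nblt rv Pfacts by linarith
  qed
  have S1: "(\<Sum>v\<in>V. din v) \<le> 2 * (\<Sum>v\<in>V. \<beta> v * din v)"
  proof -
    have pw: "(1 - cr A v w) * adj v w \<le> (1 - cr A v w) * adj v w * (\<beta> v + \<beta> w)" if "v \<in> V" "w \<in> V" for v w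
    proof (cases "cr A v w = 0 \<and> adj v w = 1")
      case True
      have "\<beta> v = 1 \<or> \<beta> w = 1"
      proof (rule ccontr)
        assume "\<not> ?thesis"
        then have "r v \<le> \<tau>" "r w \<le> \<tau>" by (auto simp: \<beta>_def split: if_splits)
        then show False using gg[of v w] True by auto
      qed
      then show ?thesis using True \<beta>01[of v] \<beta>01[of w] by auto
    next
      case False
      then have "(1 - cr A v w) * adj v w = 0" using adj_cases[of v w] cr_cases[of A v w] by auto
      then show ?thesis by (simp only: mult_zero_left; simp)
    qed
    have "(\<Sum>v\<in>V. din v) \<le> (\<Sum>v\<in>V. \<Sum>w\<in>V. (1 - cr A v w) * adj v w * (\<beta> v + \<beta> w))"
      unfolding din_def by (intro sum_mono pw)
    also have "\<dots> = (\<Sum>v\<in>V. \<Sum>w\<in>V. (1 - cr A v w) * adj v w * \<beta> v) + (\<Sum>v\<in>V. \<Sum>w\<in>V. (1 - cr A v w) * adj v w * \<beta> w)"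
      by (simp only: distrib_left sum.distrib)
    also have "(\<Sum>v\<in>V. \<Sum>w\<in>V. (1 - cr A v w) * adj v w * \<beta> v) = (\<Sum>v\<in>V. \<beta> v * din v)"
      by (simp add: din_def sum_distrib_left mult.commute)
    also have "(\<Sum>v\<in>V. \<Sum>w\<in>V. (1 - cr A v w) * adj v w * \<beta> w) = (\<Sum>w\<in>V. \<Sum>v\<in>V. (1 - cr A v w) * adj v w * \<beta> w)"
      by (rule sum.swap)
    also have "\<dots> = (\<Sum>w\<in>V. \<beta> w * din w)"
      by (simp add: din_def cr_sym adj_sym sum_distrib_left sum_distrib_right algebra_simps)
    finally show ?thesis by simp
  qed
  have S2: "2 * (\<Sum>v\<in>V. \<beta> v * r v) - nb * nb \<le> R"
  proof -
    have pw: "cr A v w * (1 - adj v w) * (\<beta> v + \<beta> w) - \<beta> v * \<beta> w \<le> cr A v w * (1 - adj v w)" for v w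
      using adj_cases[of v w] cr_cases[of A v w] \<beta>01[of v] \<beta>01[of w] by (elim disjE) simp_all
    have e3: "nb * nb = (\<Sum>v\<in>V. \<Sum>w\<in>V. \<beta> v * \<beta> w)" by (simp add: nb_def sum_product)
    have e2: "(\<Sum>w\<in>V. \<beta> w * r w) = (\<Sum>v\<in>V. \<Sum>w\<in>V. cr A v w * (1 - adj v w) * \<beta> w)"
    proof -
      have "(\<Sum>v\<in>V. \<Sum>w\<in>V. cr A v w * (1 - adj v w) * \<beta> w) = (\<Sum>w\<in>V. \<Sum>v\<in>V. cr A v w * (1 - adj v w) * \<beta> w)"
        by (rule sum.swap)
      also have "\<dots> = (\<Sum>w\<in>V. \<beta> w * r w)"
        by (simp add: r_def cr_sym adj_sym sum_distrib_left sum_distrib_right algebra_simps)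
      finally show ?thesis by simp
    qed
    have e1: "(\<Sum>v\<in>V. \<beta> v * r v) = (\<Sum>v\<in>V. \<Sum>w\<in>V. cr A v w * (1 - adj v w) * \<beta> v)"
      by (simp add: r_def sum_distrib_left algebra_simps)
    have e4: "(\<Sum>v\<in>V. \<Sum>w\<in>V. cr A v w * (1 - adj v w) * (\<beta> v + \<beta> w) - \<beta> v * \<beta> w)
       = (\<Sum>v\<in>V. \<Sum>w\<in>V. cr A v w * (1 - adj v w) * \<beta> v) + (\<Sum>v\<in>V. \<Sum>w\<in>V. cr A v w * (1 - adj v w) * \<beta> w)
        - (\<Sum>v\<in>V. \<Sum>w\<in>V. \<beta> v * \<beta> w)"
      by (simp only: distrib_left sum.distrib sum_subtractf)
    have "(\<Sum>v\<in>V. \<Sum>w\<in>V. cr A v w * (1 - adj v w) * (\<beta> v + \<beta> w) - \<beta> v * \<beta> w)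
        \<le> (\<Sum>v\<in>V. \<Sum>w\<in>V. cr A v w * (1 - adj v w))" by (intro sum_mono pw)
    also have "\<dots> = R" by (simp add: R_def r_def)
    finally show ?thesis using e1 e2 e3 e4 by linarith
  qed
  have S3: "(\<Sum>v\<in>V. \<beta> v * din v) \<le> (\<Sum>v\<in>V. \<beta> v * r v) - nb * nb"
  proof -
    have "(\<Sum>v\<in>V. \<beta> v * din v) \<le> (\<Sum>v\<in>V. \<beta> v * (r v - nb))"
    proof (intro sum_mono)
      fix v assume "v \<in> V"
      then show "\<beta> v * din v \<le> \<beta> v * (r v - nb)"
        using badv[of v] by (cases "\<tau> < r v") (auto simp: \<beta>_def)
    qed
    also have "\<dots> = (\<Sum>v\<in>V. \<beta> v * r v) - nb * nb"
      by (simp add: nb_def algebra_simps sum_subtractf sum_distrib_right)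
    finally show ?thesis .
  qed
  have "0 \<le> nb * nb" by simp
  then show False using S1 S2 S3 dinR by linarith
qed


end

theorem theorem2:
  fixes \<alpha> :: real
  assumes "1/3 < \<alpha>" and "\<alpha> < 1/2"
  shows "\<exists>\<beta>>0. \<exists>N::nat. \<forall>n\<ge>N. \<forall>(V::nat set) (E::nat set set).
           simple_graph V E \<and> card V = n \<and> card E \<ge> n^2 div 4 + 1 \<and>
           real (max_book V E) < \<alpha> * real n / 2
           \<longrightarrow> real (card (triangles V E)) \<ge> \<beta> * real n ^ 3"
proof -
  define c where "c = \<alpha> / 2"
  define \<eta> where "\<eta> = 1/4 - c"
  have c: "0 < c" "c < 1/4" using assms by (auto simp: c_def)
  have \<eta>: "0 < \<eta>" using c by (simp add: \<eta>_def)
  define \<mu> where "\<mu> = (1/4 - c)^2 / 16"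
  have \<mu>: "0 < \<mu>" using c by (simp add: \<mu>_def)
  show ?thesis
  proof (intro exI[of _ "\<mu> / 27"] conjI exI[of _ "1::nat"] allI impI)
    show "0 < \<mu> / 27" using \<mu> by simp
    fix n :: nat and V :: "nat set" and E :: "nat set set"
    assume n1: "1 \<le> n"
    assume H: "simple_graph V E \<and> card V = n \<and> card E \<ge> n^2 div 4 + 1 \<and>
           real (max_book V E) < \<alpha> * real n / 2"
    then have sgVE: "simple_graph V E" and cV: "card V = n" and cE: "card E \<ge> n^2 div 4 + 1"
      and mb: "real (max_book V E) < \<alpha> * real n / 2" by auto
    interpret sg V E by (rule sg.intro[OF sgVE])
    show "\<mu> / 27 * real n ^ 3 \<le> real (card (triangles V E))"
    proof (rule ccontr)
      assume "\<not> ?thesis"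
      then have tri: "real (card (triangles V E)) < \<mu> / 27 * real n ^ 3" by simp
      have n0: "0 < n" using n1 by simp
      have "n^2 < 4 * (n^2 div 4 + 1)" by simp
      also have "\<dots> \<le> 4 * card E" using cE by simp
      finally have "real (n^2) < 4 * real (card E)" by linarith
      then have D: "real n ^ 2 / 2 < DD" using card_E by (simp add: DD_def)
      have TT: "TT < \<mu> * real n ^ 3" using tri_count tri by (simp add: TT_def)
      obtain x where x: "x \<in> V" "real n ^ 2 / 2 - 2 * TT / real n \<le> X (Nb x)"
        using stage1[OF cV n0 less_imp_le[OF D]] by auto
      define M where "M = Max (X ` Pow V)"
      have finP: "finite (X ` Pow V)" using finV by simp
      have "M \<in> X ` Pow V" unfolding M_def by (rule Max_in[OF finP]) auto
      then obtain A where A: "A \<subseteq> V" "X A = M" by auto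
      have amax: "X A' \<le> X A" if "A' \<subseteq> V" for A' using that A(2) finP by (auto simp: M_def)
      interpret mc V E A by (rule mc.intro, unfold_locales) (use A amax in auto)
      have "Nb x \<subseteq> V" by (auto simp: Nb_def)
      then have XNb: "X (Nb x) \<le> X A" by (rule amax)
      have "2 * TT / real n < 2 * \<mu> * real n ^ 2"
        using TT n0 by (simp add: field_simps power3_eq_cube power2_eq_square)
      then have XA: "real n ^ 2 / 2 - 2 * ((1/4 - c)^2 / 16) * real n ^ 2 < X A"
        using x(2) XNb by (simp add: \<mu>_def)
      have bk: "com u v < c * real n" if "{u,v} \<in> E" for u v
        using book_bound[OF that] mb by (simp add: com_def c_def)
      show False by (rule main[OF c cV n0 D XA bk])
    qed
  qed
qed

end
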